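(* Let $R$ be a unital ring with involution and let $a,b\in R$ both be core invertible with $a\overset{\circledast}{\leq} b$. Then: (1) $ab$, $a^2$ and $ba$ are core invertible and $(ab)^{\circledast}=b^{\circledast}a^{\circledast}=(a^{\circledast})^{2}=(a^{2})^{\circledast}=(ba)^{\circledast}$; (2) if moreover $a$ is an EP element, then $ab$ is an EP element.
   Context: $R$ is a ring with identity and an involution $x\mapsto x^{*}$. An element $a\in R$ is core invertible if there exists $x\in R$ with $axa=a$, $xR=aR$ and $Rx=Ra^{*}$; such $x$ is unique, called the core inverse of $a$ and denoted $a^{\circledast}$. For $a$ core invertible and $b\in R$, $a\overset{\circledast}{\leq} b$ means $a^{\circledast}a=a^{\circledast}b$ and $aa^{\circledast}=ba^{\circledast}$. The Moore–Penrose inverse of $a$ is the (unique if it exists) $x$ with $axa=a$, $xax=x$, $(ax)^*=ax$, $(xa)^*=xa$, denoted $a^{\dagger}$. The group inverse of $a$ is the (unique if it exists) $x$ with $axa=a$, $xax=x$, $ax=xa$, denoted $a^{\#}$. An element $a$ is EP if both $a^{\dagger}$ and $a^{\#}$ exist and $a^{\dagger}=a^{\#}$. *)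

theory Defs
  imports Main
begin

class ring_invol = ring_1 +
  fixes invol :: "'a \<Rightarrow> 'a"  ("_\<^sup>\<star>" [1000] 999)
  assumes invol_invol: "(x\<^sup>\<star>)\<^sup>\<star> = x"
    and invol_add: "(x + y)\<^sup>\<star> = x\<^sup>\<star> + y\<^sup>\<star>"
    and invol_mult: "(x * y)\<^sup>\<star> = y\<^sup>\<star> * x\<^sup>\<star>"

context ring_invol
begin

definition right_ideal :: "'a \<Rightarrow> 'a set" where
  "right_ideal a = {a * r | r. True}"

definition left_ideal :: "'a \<Rightarrow> 'a set" where
  "left_ideal a = {r * a | r. True}"

definition is_core_inverse :: "'a \<Rightarrow> 'a \<Rightarrow> bool" where
  "is_core_inverse a x \<longleftrightarrow> a * x * a = a \<and> right_ideal x = right_ideal a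
      \<and> left_ideal x = left_ideal (a\<^sup>\<star>)"

definition core_invertible :: "'a \<Rightarrow> bool" where
  "core_invertible a \<longleftrightarrow> (\<exists>x. is_core_inverse a x)"

definition core_inv :: "'a \<Rightarrow> 'a" where
  "core_inv a = (THE x. is_core_inverse a x)"

definition core_le :: "'a \<Rightarrow> 'a \<Rightarrow> bool" where
  "core_le a b \<longleftrightarrow> core_inv a * a = core_inv a * b \<and> a * core_inv a = b * core_inv a"

definition is_MP_inverse :: "'a \<Rightarrow> 'a \<Rightarrow> bool" where
  "is_MP_inverse a x \<longleftrightarrow> a * x * a = a \<and> x * a * x = x
     \<and> (a * x)\<^sup>\<star> = a * x \<and> (x * a)\<^sup>\<star> = x * a"

definition is_group_inverse :: "'a \<Rightarrow> 'a \<Rightarrow> bool" where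
  "is_group_inverse a x \<longleftrightarrow> a * x * a = a \<and> x * a * x = x \<and> a * x = x * a"

definition MP_inv :: "'a \<Rightarrow> 'a" where
  "MP_inv a = (THE x. is_MP_inverse a x)"

definition group_inv :: "'a \<Rightarrow> 'a" where
  "group_inv a = (THE x. is_group_inverse a x)"

definition is_EP :: "'a \<Rightarrow> bool" where
  "is_EP a \<longleftrightarrow> (\<exists>x. is_MP_inverse a x) \<and> (\<exists>x. is_group_inverse a x)
      \<and> MP_inv a = group_inv a"

end

end

theory Submission
  imports Defs
begin

context ring_invol
begin

lemma core_char:
  "is_core_inverse a x \<longleftrightarrow> (a*x*a = a \<and> x*a*x = x \<and> (a*x)\<^sup>\<star> = a*x \<and> x*a*a = a \<and> a*x*x = x)"
proof
  assume H: "is_core_inverse a x"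
  have axa: "a*x*a = a" using H unfolding is_core_inverse_def by blast
  have R: "right_ideal x = right_ideal a" and L: "left_ideal x = left_ideal (a\<^sup>\<star>)"
    using H unfolding is_core_inverse_def by blast+
  have "x \<in> right_ideal a" using R unfolding right_ideal_def by (metis (mono_tags, lifting) mem_Collect_eq mult_1_right)
  then obtain r where r: "x = a*r" unfolding right_ideal_def by blast
  have "a \<in> right_ideal x" using R unfolding right_ideal_def by (metis (mono_tags, lifting) mem_Collect_eq mult_1_right)
  then obtain s where s: "a = x*s" unfolding right_ideal_def by blast
  have "x \<in> left_ideal (a\<^sup>\<star>)" using L unfolding left_ideal_def by (metis (mono_tags, lifting) mem_Collect_eq mult_1_left)
  then obtain t where t: "x = t*a\<^sup>\<star>" unfolding left_ideal_def by blast
  have h1: "a*x*x = x"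
  proof -
    have "a*x*x = a*x*(a*r)" using r by simp
    also have "\<dots> = (a*x*a)*r" by (simp add: mult.assoc)
    finally show ?thesis using axa r by simp
  qed
  have as: "a\<^sup>\<star> * (a*x)\<^sup>\<star> = a\<^sup>\<star>"
    using arg_cong[OF axa, of invol] by (simp add: invol_mult mult.assoc)
  have h2: "x * (a*x)\<^sup>\<star> = x"
    using t as by (metis mult.assoc)
  have h3: "(a*x)\<^sup>\<star> = a*x"
  proof -
    have e: "a*x = (a*x)*(a*x)\<^sup>\<star>" using h2 by (simp add: mult.assoc)
    have "(a*x)\<^sup>\<star> = ((a*x)*(a*x)\<^sup>\<star>)\<^sup>\<star>" using e by simp
    also have "\<dots> = (a*x)*(a*x)\<^sup>\<star>" by (simp add: invol_mult invol_invol)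
    finally show ?thesis using e by simp
  qed
  have h4: "x*a*x = x" using h2 h3 by (simp add: mult.assoc)
  have h5: "x*a*a = a"
  proof -
    have "x*a*a = x*a*(x*s)" using s by simp
    also have "\<dots> = (x*a*x)*s" by (simp add: mult.assoc)
    finally show ?thesis using h4 s by simp
  qed
  show "a*x*a = a \<and> x*a*x = x \<and> (a*x)\<^sup>\<star> = a*x \<and> x*a*a = a \<and> a*x*x = x"
    using axa h1 h3 h4 h5 by blast
next
  assume H: "a*x*a = a \<and> x*a*x = x \<and> (a*x)\<^sup>\<star> = a*x \<and> x*a*a = a \<and> a*x*x = x"
  hence axa: "a*x*a = a" and xax: "x*a*x = x" and herm: "(a*x)\<^sup>\<star> = a*x"
    and xaa: "x*a*a = a" and axx: "a*x*x = x" by auto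
  have R: "right_ideal x = right_ideal a"
    unfolding right_ideal_def
  proof (intro set_eqI iffI; clarsimp)
    fix r show "\<exists>r'. x*r = a*r'" using axx by (metis mult.assoc)
  next
    fix r show "\<exists>r'. a*r = x*r'" using xaa by (metis mult.assoc)
  qed
  have x1: "x = x*(x\<^sup>\<star>*a\<^sup>\<star>)"
    using xax herm by (metis invol_mult mult.assoc)
  have a1: "a\<^sup>\<star> = a\<^sup>\<star>*(a*x)"
    using arg_cong[OF axa, of invol] herm by (metis invol_mult)
  have L: "left_ideal x = left_ideal (a\<^sup>\<star>)"
    unfolding left_ideal_def
  proof (intro set_eqI iffI; clarsimp)
    fix r show "\<exists>r'. r*x = r'*a\<^sup>\<star>" using x1 by (metis mult.assoc)
  next
    fix r show "\<exists>r'. r*a\<^sup>\<star> = r'*x" using a1 by (metis mult.assoc)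
  qed
  show "is_core_inverse a x" unfolding is_core_inverse_def using axa R L by blast
qed

lemma core_unique:
  assumes "is_core_inverse a x" "is_core_inverse a y" shows "x = y"
proof -
  have X: "a*x*a = a" "x*a*x = x" "(a*x)\<^sup>\<star> = a*x" "x*a*a = a" "a*x*x = x"
    using assms(1) core_char by auto
  have Y: "a*y*a = a" "y*a*y = y" "(a*y)\<^sup>\<star> = a*y" "y*a*a = a" "a*y*y = y"
    using assms(2) core_char by auto
  have e1: "a*x*(a*y) = a*y" using X(1) by (simp add: mult.assoc[symmetric])
  have e2: "a*y*(a*x) = a*x" using Y(1) by (simp add: mult.assoc[symmetric])
  have axay: "a*x = a*y"
  proof -
    have "a*x = (a*y*(a*x))\<^sup>\<star>" using e2 X(3) by simp
    also have "\<dots> = a*x*(a*y)" using X(3) Y(3) by (simp add: invol_mult)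
    finally show ?thesis using e1 by simp
  qed
  have "x = x*a*y" using X(2) axay by (simp add: mult.assoc)
  also have "\<dots> = x*a*(a*y*y)" using Y(5) by simp
  also have "\<dots> = (x*a*a)*y*y" by (simp add: mult.assoc)
  also have "\<dots> = y" using X(4) Y(5) by (simp add: mult.assoc)
  finally show ?thesis .
qed

lemma core_inv_eq: "is_core_inverse a x \<Longrightarrow> core_inv a = x"
  unfolding core_inv_def using core_unique by blast

lemma MP_unique:
  assumes "is_MP_inverse a x" "is_MP_inverse a y" shows "x = y"
proof -
  have X: "a*x*a = a" "x*a*x = x" "(a*x)\<^sup>\<star> = a*x" "(x*a)\<^sup>\<star> = x*a"
    using assms(1) unfolding is_MP_inverse_def by auto
  have Y: "a*y*a = a" "y*a*y = y" "(a*y)\<^sup>\<star> = a*y" "(y*a)\<^sup>\<star> = y*a"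
    using assms(2) unfolding is_MP_inverse_def by auto
  have "x = x*(a*x)\<^sup>\<star>" using X(2,3) by (simp add: mult.assoc)
  also have "\<dots> = x*((a*y*a)*x)\<^sup>\<star>" using Y(1) by simp
  also have "\<dots> = x*(a*x)\<^sup>\<star>*(a*y)\<^sup>\<star>" by (simp add: invol_mult mult.assoc)
  also have "\<dots> = x*a*y" using X(2,3) Y(3) by (simp add: mult.assoc)
  finally have 1: "x = x*a*y" .
  have "y = (y*a)\<^sup>\<star>*y" using Y(2,4) by (simp add: mult.assoc)
  also have "\<dots> = (y*(a*x*a))\<^sup>\<star>*y" using X(1) by simp
  also have "\<dots> = (x*a)\<^sup>\<star>*(y*a)\<^sup>\<star>*y" by (simp add: invol_mult mult.assoc)
  also have "\<dots> = x*a*y" using Y(2,4) X(4) by (simp add: mult.assoc)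
  finally show ?thesis using 1 by simp
qed

lemma group_unique:
  assumes "is_group_inverse a x" "is_group_inverse a y" shows "x = y"
proof -
  have X: "a*x*a = a" "x*a*x = x" "a*x = x*a"
    using assms(1) unfolding is_group_inverse_def by auto
  have Y: "a*y*a = a" "y*a*y = y" "a*y = y*a"
    using assms(2) unfolding is_group_inverse_def by auto
  have "a*x = x*(a*y*a)" using X(3) Y(1) by simp
  also have "\<dots> = x*a*(a*y)" using Y(3) by (metis mult.assoc)
  also have "\<dots> = a*x*a*y" using X(3) by (simp add: mult.assoc)
  also have "\<dots> = a*y" using X(1) by simp
  finally have axay: "a*x = a*y" .
  have "x = x*(x*a)" using X(2,3) by (simp add: mult.assoc)
  also have "\<dots> = x*(a*y)" using X(3) axay by simp
  also have "\<dots> = a*y*y" using X(3) axay by (metis mult.assoc)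
  also have "\<dots> = y" using Y(2,3) by (simp add: mult.assoc)
  finally show ?thesis .
qed

end

theorem theorem2p10:
  fixes a b :: "'a::ring_invol"
  assumes "core_invertible a" and "core_invertible b" and "core_le a b"
  shows "core_invertible (a * b) \<and> core_invertible (a ^ 2) \<and> core_invertible (b * a)
         \<and> core_inv (a * b) = core_inv b * core_inv a
         \<and> core_inv b * core_inv a = (core_inv a) ^ 2
         \<and> (core_inv a) ^ 2 = core_inv (a ^ 2)
         \<and> core_inv (a ^ 2) = core_inv (b * a)
         \<and> (is_EP a \<longrightarrow> is_EP (a * b))"
proof -
  obtain x where hx: "is_core_inverse a x" using assms(1) unfolding core_invertible_def by blast
  obtain y where hy: "is_core_inverse b y" using assms(2) unfolding core_invertible_def by blast
  have cx: "core_inv a = x" using hx core_inv_eq by blast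
  have cy: "core_inv b = y" using hy core_inv_eq by blast
  have X: "a*x*a = a" "x*a*x = x" "(a*x)\<^sup>\<star> = a*x" "x*a*a = a" "a*x*x = x"
    using hx core_char by auto
  have Y: "b*y*b = b" "y*b*y = y" "(b*y)\<^sup>\<star> = b*y" "y*b*b = b" "b*y*y = y"
    using hy core_char by auto
  have le1: "x*a = x*b" and le2: "a*x = b*x" using assms(3) cx unfolding core_le_def by auto
  have ba: "b*a = a*a"
  proof -
    have "b*a = b*x*a*a" using X(4) by (simp add: mult.assoc)
    also have "\<dots> = a*x*a*a" using le2 by simp
    finally show ?thesis using X(1) by simp
  qed
  have xbxx: "b*x*x = x" using X(5) le2 by simp
  have ybx: "y*b*x = x"
  proof -
    have "y*b*x = y*b*(b*x*x)" using xbxx by simp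
    also have "\<dots> = (y*b*b)*x*x" by (simp add: mult.assoc)
    finally show ?thesis using Y(4) xbxx by simp
  qed
  have yx: "y*x = x*x"
  proof -
    have "y*x = y*(b*x*x)" using xbxx by simp
    also have "\<dots> = (y*b*x)*x" by (simp add: mult.assoc)
    finally show ?thesis using ybx by simp
  qed
  have AX: "a*b*(x*x) = a*x"
  proof -
    have "a*b*(x*x) = a*(b*x)*x" by (simp add: mult.assoc)
    also have "\<dots> = a*(a*x*x)" using le2 by (simp add: mult.assoc)
    finally show ?thesis using X(5) by simp
  qed
  have c1: "is_core_inverse (a*b) (x*x)"
    unfolding core_char
  proof (intro conjI)
    show "a*b*(x*x)*(a*b) = a*b" using AX X(1) by (simp add: mult.assoc[symmetric])
    show "(a*b*(x*x))\<^sup>\<star> = a*b*(x*x)" using AX X(3) by simp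
    have "x*x*(a*b)*(x*x) = x*(x*a)*(b*x)*x" by (simp add: mult.assoc)
    also have "\<dots> = x*(x*a*a)*x*x" using le2 by (simp add: mult.assoc)
    also have "\<dots> = x*x" using X(4) X(2) by simp
    finally show "x*x*(a*b)*(x*x) = x*x" .
    have "x*x*(a*b)*(a*b) = x*x*a*(b*a)*b" by (simp add: mult.assoc)
    also have "\<dots> = x*(x*a*a)*a*b" using ba by (simp add: mult.assoc)
    also have "\<dots> = a*b" using X(4) by simp
    finally show "x*x*(a*b)*(a*b) = a*b" .
    have "a*b*(x*x)*(x*x) = a*b*(x*x)*x*x" by (simp add: mult.assoc)
    also have "\<dots> = x*x" using AX X(5) by simp
    finally show "a*b*(x*x)*(x*x) = x*x" .
  qed
  have c2: "is_core_inverse (a*a) (x*x)"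
    unfolding core_char
  proof (intro conjI)
    have AX2: "a*a*(x*x) = a*x" using X(5) by (simp add: mult.assoc)
    show "a*a*(x*x)*(a*a) = a*a" using AX2 X(1) by (simp add: mult.assoc[symmetric])
    show "(a*a*(x*x))\<^sup>\<star> = a*a*(x*x)" using AX2 X(3) by simp
    have "x*x*(a*a)*(x*x) = x*(x*a*a)*x*x" by (simp add: mult.assoc)
    also have "\<dots> = x*x" using X(4) X(2) by simp
    finally show "x*x*(a*a)*(x*x) = x*x" .
    have "x*x*(a*a)*(a*a) = x*(x*a*a)*a*a" by (simp add: mult.assoc)
    also have "\<dots> = a*a" using X(4) by (simp add: mult.assoc)
    finally show "x*x*(a*a)*(a*a) = a*a" .
    have "a*a*(x*x)*(x*x) = a*a*(x*x)*x*x" by (simp add: mult.assoc)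
    also have "\<dots> = x*x" using AX2 X(5) by simp
    finally show "a*a*(x*x)*(x*x) = x*x" .
  qed
  have i1: "core_inv (a*b) = x*x" using c1 core_inv_eq by blast
  have i2: "core_inv (a^2) = x*x" using c2 core_inv_eq by (simp add: power2_eq_square)
  have i3: "core_inv (b*a) = x*x" using c2 core_inv_eq ba by simp
  have EP: "is_EP a \<longrightarrow> is_EP (a * b)"
  proof
    assume "is_EP a"
    then obtain z g where z: "is_MP_inverse a z" and g: "is_group_inverse a g"
      and zg: "MP_inv a = group_inv a" unfolding is_EP_def by blast
    have "MP_inv a = z" unfolding MP_inv_def using z MP_unique by blast
    moreover have "group_inv a = g" unfolding group_inv_def using g group_unique by blast
    ultimately have gz: "g = z" using zg by simp
    have "is_core_inverse a g" unfolding core_char using z g gz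
      unfolding is_MP_inverse_def is_group_inverse_def
      by (metis mult.assoc)
    hence gx: "g = x" using hx core_unique by blast
    have com: "a*x = x*a" using g gx unfolding is_group_inverse_def by simp
    have xah: "(x*a)\<^sup>\<star> = x*a" using z gz gx unfolding is_MP_inverse_def by simp
    have XA: "x*x*(a*b) = x*a"
    proof -
      have "x*x*(a*b) = x*(a*x)*b" using com by (simp add: mult.assoc)
      also have "\<dots> = (x*a)*(x*b)" by (simp add: mult.assoc)
      also have "\<dots> = x*a*x*a" using le1 by (simp add: mult.assoc)
      finally show ?thesis using X(2) by simp
    qed
    have c1': "a*b*(x*x)*(a*b) = a*b" "x*x*(a*b)*(x*x) = x*x"
      using c1 core_char by auto
    have m: "is_MP_inverse (a*b) (x*x)" unfolding is_MP_inverse_def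
      using c1' AX XA X(3) xah by simp
    have gg: "is_group_inverse (a*b) (x*x)" unfolding is_group_inverse_def
      using c1' AX XA com by simp
    have "MP_inv (a*b) = x*x" unfolding MP_inv_def using m MP_unique by blast
    moreover have "group_inv (a*b) = x*x" unfolding group_inv_def using gg group_unique by blast
    ultimately show "is_EP (a*b)" unfolding is_EP_def using m gg by auto
  qed
  show ?thesis
    unfolding cx cy
    using c1 c2 ba i1 i2 i3 yx EP
    unfolding core_invertible_def by (auto simp: power2_eq_square)
qed

end
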